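(* Let $(X,\Gamma)$ be a $(\mu,\nu)$-path system space. For every $\delta\ge0$ there exists $\theta\ge0$ such that for all $\delta$-constricting maps $\pi_A\colon X\to A$ and $\pi_B\colon X\to B$ we have $\operatorname{diam}_A(B)\le\operatorname{diam}_B(A)+\theta$ and $\operatorname{diam}_B(A)\le\operatorname{diam}_A(B)+\theta$.
   Context: A path is a rectifiable continuous map $\alpha\colon[a,b]\to X$ parametrised by arc length; it is a $(\kappa,\lambda)$-quasi-geodesic if $d(\alpha(t),\alpha(t'))\le|t-t'|\le\kappa d(\alpha(t),\alpha(t'))+\lambda$. A $(\mu,\nu)$-path system space $(X,\Gamma)$ is a geodesic metric space $X$ with a collection $\Gamma$ of paths closed under subpaths, such that any two points are joined by an element of $\Gamma$ and every element is a $(\mu,\nu)$-quasi-geodesic. A map $\pi_A\colon X\to A$ onto a subset $A$ is $\delta$-constricting if (CS1) $d(x,\pi_A(x))\le\delta$ for $x\in A$, and (CS2) for all $x,y\in X$ and $\gamma\in\Gamma$ joining $x$ to $y$, if $d(\pi_A(x),\pi_A(y))>\delta$ then $\gamma$ meets $B_X(\pi_A(x),\delta)$ and $B_X(\pi_A(y),\delta)$. $\operatorname{diam}_A(B)=\operatorname{diam}(\pi_A(B))$. *)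

theory Defs
  imports "HOL-Analysis.Analysis"
begin

(* The metric space X is the whole (nonempty) type 'a. *)

definition geodesic_space :: "'a::metric_space itself \<Rightarrow> bool" where
  "geodesic_space _ \<longleftrightarrow>
     (\<forall>x y::'a. \<exists>g::real \<Rightarrow> 'a. g 0 = x \<and> g (dist x y) = y \<and>
        (\<forall>s\<in>{0..dist x y}. \<forall>t\<in>{0..dist x y}. dist (g s) (g t) = \<bar>s - t\<bar>))"

definition partition_sums :: "(real \<Rightarrow> 'a::metric_space) \<Rightarrow> real \<Rightarrow> real \<Rightarrow> real set" where
  "partition_sums \<alpha> s t =
     {(\<Sum>i<n. dist (\<alpha> (p i)) (\<alpha> (p (Suc i)))) | n p.
        p 0 = s \<and> p n = t \<and> (\<forall>i<n. p i \<le> p (Suc i))}"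

definition rectifiable_on :: "(real \<Rightarrow> 'a::metric_space) \<Rightarrow> real \<Rightarrow> real \<Rightarrow> bool" where
  "rectifiable_on \<alpha> a b \<longleftrightarrow> bdd_above (partition_sums \<alpha> a b)"

definition path_length :: "(real \<Rightarrow> 'a::metric_space) \<Rightarrow> real \<Rightarrow> real \<Rightarrow> real" where
  "path_length \<alpha> s t = Sup (partition_sums \<alpha> s t)"

definition is_path :: "real \<times> real \<times> (real \<Rightarrow> 'a::metric_space) \<Rightarrow> bool" where
  "is_path \<gamma> \<longleftrightarrow> (case \<gamma> of (a, b, \<alpha>) \<Rightarrow>
     a \<le> b \<and> continuous_on {a..b} \<alpha> \<and> rectifiable_on \<alpha> a b \<and>
     (\<forall>s t. a \<le> s \<and> s \<le> t \<and> t \<le> b \<longrightarrow> path_length \<alpha> s t = t - s))"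

definition quasi_geodesic :: "real \<Rightarrow> real \<Rightarrow> real \<times> real \<times> (real \<Rightarrow> 'a::metric_space) \<Rightarrow> bool" where
  "quasi_geodesic k l \<gamma> \<longleftrightarrow> is_path \<gamma> \<and> (case \<gamma> of (a, b, \<alpha>) \<Rightarrow>
     (\<forall>t\<in>{a..b}. \<forall>t'\<in>{a..b}.
        dist (\<alpha> t) (\<alpha> t') \<le> \<bar>t - t'\<bar> \<and> \<bar>t - t'\<bar> \<le> k * dist (\<alpha> t) (\<alpha> t') + l))"

definition joins :: "real \<times> real \<times> (real \<Rightarrow> 'a) \<Rightarrow> 'a \<Rightarrow> 'a \<Rightarrow> bool" where
  "joins \<gamma> x y \<longleftrightarrow> (case \<gamma> of (a, b, \<alpha>) \<Rightarrow> \<alpha> a = x \<and> \<alpha> b = y)"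

definition meets :: "real \<times> real \<times> (real \<Rightarrow> 'a) \<Rightarrow> 'a set \<Rightarrow> bool" where
  "meets \<gamma> S \<longleftrightarrow> (case \<gamma> of (a, b, \<alpha>) \<Rightarrow> (\<exists>t\<in>{a..b}. \<alpha> t \<in> S))"

definition path_system_space ::
  "real \<Rightarrow> real \<Rightarrow> (real \<times> real \<times> (real \<Rightarrow> 'a::metric_space)) set \<Rightarrow> bool" where
  "path_system_space \<mu> \<nu> \<Gamma> \<longleftrightarrow>
     geodesic_space TYPE('a) \<and>
     (\<forall>(a, b, \<alpha>)\<in>\<Gamma>. \<forall>s t. a \<le> s \<and> s \<le> t \<and> t \<le> b \<longrightarrow>
        (\<exists>\<beta>. (s, t, \<beta>) \<in> \<Gamma> \<and> (\<forall>u\<in>{s..t}. \<beta> u = \<alpha> u))) \<and>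
     (\<forall>x y. \<exists>\<gamma>\<in>\<Gamma>. joins \<gamma> x y) \<and>
     (\<forall>\<gamma>\<in>\<Gamma>. quasi_geodesic \<mu> \<nu> \<gamma>)"

definition constricting ::
  "(real \<times> real \<times> (real \<Rightarrow> 'a::metric_space)) set \<Rightarrow> real \<Rightarrow> 'a set \<Rightarrow> ('a \<Rightarrow> 'a) \<Rightarrow> bool" where
  "constricting \<Gamma> \<delta> A \<pi> \<longleftrightarrow>
     range \<pi> = A \<and>
     (\<forall>x\<in>A. dist x (\<pi> x) \<le> \<delta>) \<and>
     (\<forall>x y. \<forall>\<gamma>\<in>\<Gamma>. joins \<gamma> x y \<and> dist (\<pi> x) (\<pi> y) > \<delta> \<longrightarrow>
        meets \<gamma> (ball (\<pi> x) \<delta>) \<and> meets \<gamma> (ball (\<pi> y) \<delta>))"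

definition ediam :: "'a::metric_space set \<Rightarrow> ereal" where
  "ediam S = (SUP x\<in>S. SUP y\<in>S. ereal (dist x y))"

end

theory Submission
  imports Defs
begin

locale PSS =
  fixes \<mu> \<nu> :: real and \<Gamma> :: "(real \<times> real \<times> (real \<Rightarrow> 'a::metric_space)) set"
  assumes pss: "path_system_space \<mu> \<nu> \<Gamma>"
begin

lemma sub: "(a, c, \<alpha>) \<in> \<Gamma> \<Longrightarrow> a \<le> s \<Longrightarrow> s \<le> t \<Longrightarrow> t \<le> c \<Longrightarrow>
   \<exists>\<beta>. (s, t, \<beta>) \<in> \<Gamma> \<and> (\<forall>u\<in>{s..t}. \<beta> u = \<alpha> u)"
  using pss unfolding path_system_space_def by fast

lemma join: "\<exists>a c \<alpha>. (a, c, \<alpha>) \<in> \<Gamma> \<and> \<alpha> a = x \<and> \<alpha> c = y"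
proof -
  obtain g where "g \<in> \<Gamma>" "joins g x y" using pss unfolding path_system_space_def by blast
  then show ?thesis unfolding joins_def by (cases g) auto
qed

lemma qg: assumes "(a, c, \<alpha>) \<in> \<Gamma>" "t \<in> {a..c}" "t' \<in> {a..c}"
  shows "dist (\<alpha> t) (\<alpha> t') \<le> \<bar>t - t'\<bar>" "\<bar>t - t'\<bar> \<le> \<bar>\<mu>\<bar> * dist (\<alpha> t) (\<alpha> t') + \<bar>\<nu>\<bar>"
proof -
  have q: "quasi_geodesic \<mu> \<nu> (a, c, \<alpha>)" using pss assms(1) unfolding path_system_space_def by blast
  then show "dist (\<alpha> t) (\<alpha> t') \<le> \<bar>t - t'\<bar>" using assms unfolding quasi_geodesic_def by auto
  have "\<bar>t - t'\<bar> \<le> \<mu> * dist (\<alpha> t) (\<alpha> t') + \<nu>" using q assms unfolding quasi_geodesic_def by auto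
  moreover have "\<mu> * dist (\<alpha> t) (\<alpha> t') \<le> \<bar>\<mu>\<bar> * dist (\<alpha> t) (\<alpha> t')"
    by (simp add: mult_right_mono)
  ultimately show "\<bar>t - t'\<bar> \<le> \<bar>\<mu>\<bar> * dist (\<alpha> t) (\<alpha> t') + \<bar>\<nu>\<bar>" by linarith
qed

lemma ple: assumes "(a, c, \<alpha>) \<in> \<Gamma>" shows "a \<le> c"
  using pss assms unfolding path_system_space_def quasi_geodesic_def is_path_def by auto

lemma lip: assumes "constricting \<Gamma> \<delta> A \<pi>" "\<delta> \<ge> 0"
  shows "dist (\<pi> u) (\<pi> v) \<le> 2*\<delta> + \<bar>\<mu>\<bar> * dist u v + \<bar>\<nu>\<bar>"
proof (cases "dist (\<pi> u) (\<pi> v) \<le> \<delta>")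
  case True then show ?thesis using assms(2) by (smt (verit) abs_ge_zero zero_le_dist mult_nonneg_nonneg)
next
  case False
  obtain a c \<alpha> where g: "(a, c, \<alpha>) \<in> \<Gamma>" "\<alpha> a = u" "\<alpha> c = v" using join by blast
  have "meets (a, c, \<alpha>) (ball (\<pi> u) \<delta>) \<and> meets (a, c, \<alpha>) (ball (\<pi> v) \<delta>)"
    using assms(1) g False unfolding constricting_def joins_def by (auto simp: not_le)
  then obtain t t' where t: "t \<in> {a..c}" "dist (\<pi> u) (\<alpha> t) < \<delta>" "t' \<in> {a..c}" "dist (\<pi> v) (\<alpha> t') < \<delta>"
    unfolding meets_def by auto
  have ac: "a \<le> c" using ple g by blast
  have "dist (\<alpha> t) (\<alpha> t') \<le> \<bar>t - t'\<bar>" using qg g t by blast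
  also have "\<bar>t - t'\<bar> \<le> \<bar>a - c\<bar>" using t by auto
  also have "\<bar>a - c\<bar> \<le> \<bar>\<mu>\<bar> * dist u v + \<bar>\<nu>\<bar>" using qg(2)[OF g(1), of a c] g ac by auto
  finally have "dist (\<alpha> t) (\<alpha> t') \<le> \<bar>\<mu>\<bar> * dist u v + \<bar>\<nu>\<bar>" .
  moreover have "dist (\<pi> u) (\<pi> v) \<le> dist (\<pi> u) (\<alpha> t) + dist (\<alpha> t) (\<alpha> t') + dist (\<pi> v) (\<alpha> t')"
    using dist_triangle[of "\<pi> u" "\<pi> v" "\<alpha> t"] dist_triangle[of "\<alpha> t" "\<pi> v" "\<alpha> t'"]
    by (simp add: dist_commute)
  ultimately show ?thesis using t by linarith
qed

lemma P: assumes "constricting \<Gamma> \<delta> B \<pi>" "bb \<in> B" "(a, c, \<alpha>) \<in> \<Gamma>"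
  "(\<alpha> a = z \<and> \<alpha> c = bb) \<or> (\<alpha> a = bb \<and> \<alpha> c = z)"
  shows "\<exists>t\<in>{a..c}. dist (\<alpha> t) (\<pi> z) \<le> 2*\<delta>"
proof (cases "dist (\<pi> z) (\<pi> bb) \<le> \<delta>")
  case True
  have d: "dist bb (\<pi> bb) \<le> \<delta>" using assms(1,2) unfolding constricting_def by blast
  have "dist bb (\<pi> z) \<le> 2*\<delta>" using True d dist_triangle[of bb "\<pi> z" "\<pi> bb"]
    by (simp add: dist_commute)
  moreover have "a \<in> {a..c}" "c \<in> {a..c}" using ple assms(3) by auto
  ultimately show ?thesis using assms(4) by metis
next
  case False
  have c2: "\<And>x y. \<alpha> a = x \<and> \<alpha> c = y \<and> dist (\<pi> x) (\<pi> y) > \<delta> \<Longrightarrow>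
      meets (a, c, \<alpha>) (ball (\<pi> x) \<delta>) \<and> meets (a, c, \<alpha>) (ball (\<pi> y) \<delta>)"
    using assms(1,3) unfolding constricting_def joins_def by fastforce
  have "meets (a, c, \<alpha>) (ball (\<pi> z) \<delta>)"
    using assms(4) False c2 by (metis dist_commute not_le)
  then obtain t where "t \<in> {a..c}" "dist (\<pi> z) (\<alpha> t) < \<delta>" unfolding meets_def by auto
  moreover have "0 \<le> dist (\<pi> z) (\<alpha> t)" by simp
  moreover have "dist (\<alpha> t) (\<pi> z) = dist (\<pi> z) (\<alpha> t)" by (rule dist_commute)
  ultimately have "dist (\<alpha> t) (\<pi> z) \<le> 2*\<delta>" by linarith
  with \<open>t \<in> {a..c}\<close> show ?thesis by blast
qed

lemma near: assumes "constricting \<Gamma> \<delta> B \<pi>" "\<delta> \<ge> 0" "b \<in> B" "b' \<in> B" "(a, c, \<alpha>) \<in> \<Gamma>"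
  "\<alpha> a = b" "\<alpha> c = b'" "t \<in> {a..c}"
  shows "dist (\<alpha> t) (\<pi> (\<alpha> t)) \<le> 4*\<bar>\<mu>\<bar>*\<delta> + \<bar>\<nu>\<bar> + 2*\<delta>"
proof -
  obtain \<beta>1 where b1: "(a, t, \<beta>1) \<in> \<Gamma>" "\<forall>u\<in>{a..t}. \<beta>1 u = \<alpha> u" using sub[OF assms(5), of a t] assms(8) by auto
  obtain \<beta>2 where b2: "(t, c, \<beta>2) \<in> \<Gamma>" "\<forall>u\<in>{t..c}. \<beta>2 u = \<alpha> u" using sub[OF assms(5), of t c] assms(8) by auto
  obtain s where s: "s \<in> {a..t}" "dist (\<beta>1 s) (\<pi> (\<alpha> t)) \<le> 2*\<delta>"
    using P[OF assms(1) assms(3) b1(1), of "\<alpha> t"] b1 assms by auto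
  obtain s' where s': "s' \<in> {t..c}" "dist (\<beta>2 s') (\<pi> (\<alpha> t)) \<le> 2*\<delta>"
    using P[OF assms(1) assms(4) b2(1), of "\<alpha> t"] b2 assms by auto
  have e1: "\<beta>1 s = \<alpha> s" "\<beta>2 s' = \<alpha> s'" using s s' b1 b2 by auto
  have in1: "s \<in> {a..c}" "s' \<in> {a..c}" using s s' assms(8) by auto
  have "dist (\<alpha> s) (\<alpha> s') \<le> 4*\<delta>" using s s' e1 dist_triangle[of "\<alpha> s" "\<alpha> s'" "\<pi> (\<alpha> t)"]
    by (simp add: dist_commute)
  then have "\<bar>\<mu>\<bar> * dist (\<alpha> s) (\<alpha> s') \<le> \<bar>\<mu>\<bar> * (4*\<delta>)" by (simp add: mult_left_mono)
  then have "\<bar>s - s'\<bar> \<le> 4*\<bar>\<mu>\<bar>*\<delta> + \<bar>\<nu>\<bar>" using qg(2)[OF assms(5) in1] by linarith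
  moreover have "dist (\<alpha> t) (\<alpha> s) \<le> \<bar>t - s\<bar>" using qg(1)[OF assms(5)] assms(8) in1 by blast
  moreover have "\<bar>t - s\<bar> \<le> \<bar>s - s'\<bar>" using s s' by auto
  moreover have "dist (\<alpha> t) (\<pi> (\<alpha> t)) \<le> dist (\<alpha> t) (\<alpha> s) + dist (\<alpha> s) (\<pi> (\<alpha> t))"
    by (rule dist_triangle)
  moreover have "dist (\<alpha> s) (\<pi> (\<alpha> t)) \<le> 2*\<delta>" using s e1 by simp
  ultimately show ?thesis by linarith
qed

definition "CC \<delta> = 5*\<delta> + 5*\<bar>\<mu>\<bar>*\<delta> + 2*\<bar>\<nu>\<bar>"

lemma close: assumes "constricting \<Gamma> \<delta> A \<pi>A" "constricting \<Gamma> \<delta> B \<pi>B" "\<delta> \<ge> 0"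
  "b \<in> B" "b' \<in> B" "dist (\<pi>A b) (\<pi>A b') > \<delta>"
  shows "dist (\<pi>A b) (\<pi>B (\<pi>A b)) \<le> CC \<delta>"
proof -
  obtain a c \<alpha> where g: "(a, c, \<alpha>) \<in> \<Gamma>" "\<alpha> a = b" "\<alpha> c = b'" using join by blast
  have "meets (a, c, \<alpha>) (ball (\<pi>A b) \<delta>)"
    using assms(1,6) g unfolding constricting_def joins_def by fastforce
  then obtain t where t: "t \<in> {a..c}" "dist (\<pi>A b) (\<alpha> t) < \<delta>" unfolding meets_def by auto
  have n: "dist (\<alpha> t) (\<pi>B (\<alpha> t)) \<le> 4*\<bar>\<mu>\<bar>*\<delta> + \<bar>\<nu>\<bar> + 2*\<delta>"
    using near[OF assms(2,3,4,5) g t(1)] .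
  have l: "dist (\<pi>B (\<alpha> t)) (\<pi>B (\<pi>A b)) \<le> 2*\<delta> + \<bar>\<mu>\<bar> * dist (\<alpha> t) (\<pi>A b) + \<bar>\<nu>\<bar>"
    using lip[OF assms(2,3)] .
  have "\<bar>\<mu>\<bar> * dist (\<alpha> t) (\<pi>A b) \<le> \<bar>\<mu>\<bar> * \<delta>" using t by (simp add: dist_commute mult_left_mono)
  moreover have "dist (\<pi>A b) (\<pi>B (\<pi>A b)) \<le> dist (\<pi>A b) (\<alpha> t) + dist (\<alpha> t) (\<pi>B (\<alpha> t))
      + dist (\<pi>B (\<alpha> t)) (\<pi>B (\<pi>A b))"
    using dist_triangle[of "\<pi>A b" "\<pi>B (\<pi>A b)" "\<alpha> t"] dist_triangle[of "\<alpha> t" "\<pi>B (\<pi>A b)" "\<pi>B (\<alpha> t)"]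
    by linarith
  ultimately show ?thesis using t n l unfolding CC_def by linarith
qed

lemma CC_nonneg: "\<delta> \<ge> 0 \<Longrightarrow> CC \<delta> \<ge> 0" unfolding CC_def by simp

lemma pair: assumes "constricting \<Gamma> \<delta> A \<pi>A" "constricting \<Gamma> \<delta> B \<pi>B" "\<delta> \<ge> 0"
  "b \<in> B" "b' \<in> B"
  shows "dist (\<pi>A b) (\<pi>A b') \<le> dist (\<pi>B (\<pi>A b)) (\<pi>B (\<pi>A b')) + (2 * CC \<delta> + \<delta>)"
proof (cases "dist (\<pi>A b) (\<pi>A b') > \<delta>")
  case True
  have c1: "dist (\<pi>A b) (\<pi>B (\<pi>A b)) \<le> CC \<delta>" using close[OF assms True] .
  have c2: "dist (\<pi>A b') (\<pi>B (\<pi>A b')) \<le> CC \<delta>" using close[OF assms(1-3,5,4)] True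
    by (simp add: dist_commute)
  have "dist (\<pi>A b) (\<pi>A b') \<le> dist (\<pi>A b) (\<pi>B (\<pi>A b)) + dist (\<pi>B (\<pi>A b)) (\<pi>B (\<pi>A b'))
     + dist (\<pi>B (\<pi>A b')) (\<pi>A b')"
    using dist_triangle[of "\<pi>A b" "\<pi>A b'" "\<pi>B (\<pi>A b)"] dist_triangle[of "\<pi>B (\<pi>A b)" "\<pi>A b'" "\<pi>B (\<pi>A b')"]
    by (simp add: dist_commute)
  then show ?thesis using c1 c2 assms(3) by (simp add: dist_commute)
next
  case False
  then show ?thesis using CC_nonneg[OF assms(3)] by (smt (verit) zero_le_dist)
qed

lemma diam: assumes "constricting \<Gamma> \<delta> A \<pi>A" "constricting \<Gamma> \<delta> B \<pi>B" "\<delta> \<ge> 0"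
  shows "ediam (\<pi>A ` B) \<le> ediam (\<pi>B ` A) + ereal (2 * CC \<delta> + \<delta>)"
proof -
  have rA: "range \<pi>A = A" using assms(1) unfolding constricting_def by blast
  have "\<And>b b'. b \<in> B \<Longrightarrow> b' \<in> B \<Longrightarrow> ereal (dist (\<pi>A b) (\<pi>A b')) \<le> ediam (\<pi>B ` A) + ereal (2 * CC \<delta> + \<delta>)"
  proof -
    fix b b' assume bb: "b \<in> B" "b' \<in> B"
    have xA: "\<pi>A b \<in> A" "\<pi>A b' \<in> A" using rA by auto
    have "ereal (dist (\<pi>B (\<pi>A b)) (\<pi>B (\<pi>A b'))) \<le> ediam (\<pi>B ` A)"
      unfolding ediam_def
    proof (rule SUP_upper2[of "\<pi>B (\<pi>A b)"])
      show "\<pi>B (\<pi>A b) \<in> \<pi>B ` A" using xA by blast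
      show "ereal (dist (\<pi>B (\<pi>A b)) (\<pi>B (\<pi>A b'))) \<le> (SUP y\<in>\<pi>B ` A. ereal (dist (\<pi>B (\<pi>A b)) y))"
        using xA by (intro SUP_upper) auto
    qed
    then have "ereal (dist (\<pi>B (\<pi>A b)) (\<pi>B (\<pi>A b'))) + ereal (2 * CC \<delta> + \<delta>)
        \<le> ediam (\<pi>B ` A) + ereal (2 * CC \<delta> + \<delta>)" by (rule add_right_mono)
    moreover have "ereal (dist (\<pi>A b) (\<pi>A b')) \<le> ereal (dist (\<pi>B (\<pi>A b)) (\<pi>B (\<pi>A b'))) + ereal (2 * CC \<delta> + \<delta>)"
      using pair[OF assms bb] by simp
    ultimately show "ereal (dist (\<pi>A b) (\<pi>A b')) \<le> ediam (\<pi>B ` A) + ereal (2 * CC \<delta> + \<delta>)" by (rule order_trans[rotated])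
  qed
  then show ?thesis unfolding ediam_def by (auto intro!: SUP_least)
qed

end

theorem mainTheorem11:
  fixes \<mu> \<nu> :: real and \<Gamma> :: "(real \<times> real \<times> (real \<Rightarrow> 'a::metric_space)) set"
  assumes "path_system_space \<mu> \<nu> \<Gamma>"
  shows "\<forall>\<delta>\<ge>0. \<exists>\<theta>\<ge>0. \<forall>(A::'a set) B \<pi>A \<pi>B.
           constricting \<Gamma> \<delta> A \<pi>A \<and> constricting \<Gamma> \<delta> B \<pi>B \<longrightarrow>
             ediam (\<pi>A ` B) \<le> ediam (\<pi>B ` A) + ereal \<theta> \<and>
             ediam (\<pi>B ` A) \<le> ediam (\<pi>A ` B) + ereal \<theta>"
proof (intro allI impI)
  fix \<delta> :: real assume d: "\<delta> \<ge> 0"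
  interpret PSS \<mu> \<nu> \<Gamma> using assms by unfold_locales
  show "\<exists>\<theta>\<ge>0. \<forall>(A::'a set) B \<pi>A \<pi>B.
           constricting \<Gamma> \<delta> A \<pi>A \<and> constricting \<Gamma> \<delta> B \<pi>B \<longrightarrow>
             ediam (\<pi>A ` B) \<le> ediam (\<pi>B ` A) + ereal \<theta> \<and>
             ediam (\<pi>B ` A) \<le> ediam (\<pi>A ` B) + ereal \<theta>"
    using diam d CC_nonneg[OF d] by (intro exI[of _ "2 * CC \<delta> + \<delta>"]) auto
qed

end
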